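(* Consider the nonlinear program and the objects $\mathcal{G}_\alpha$, $K_\alpha(x)$, $\Lambda_\alpha(x)$ described in the context, with $\alpha>0$ and $x\in\mathbb{R}^n$. If $\Lambda_\alpha(x)\ne\emptyset$, then: (i) every $(u,v)\in\Lambda_\alpha(x)$ is a minimizer of $\left\|\frac{\partial g}{\partial x}(x)^\top u+\frac{\partial h}{\partial x}(x)^\top v\right\|^2$ over $(u,v)\in K_\alpha(x)$; (ii) for every minimizer $(u,v)$ of that problem, $\mathcal{G}_\alpha(x)=-\nabla f(x)-\frac{\partial g}{\partial x}(x)^\top u-\frac{\partial h}{\partial x}(x)^\top v$, i.e. $\mathcal{G}_\alpha$ is the closed-loop vector field obtained by applying this feedback to the control system $\dot x=-\nabla f(x)-\frac{\partial g}{\partial x}(x)^\top u-\frac{\partial h}{\partial x}(x)^\top v$.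
   Context: Let $f:\mathbb{R}^n\to\mathbb{R}$, $g:\mathbb{R}^n\to\mathbb{R}^m$, $h:\mathbb{R}^n\to\mathbb{R}^k$ be continuously differentiable (program: minimize $f$ subject to $g\le0$, $h=0$). Abbreviate $G=\frac{\partial g}{\partial x}(x)$, $H=\frac{\partial h}{\partial x}(x)$. For $\alpha>0$, $\mathcal{G}_\alpha(x)$ is the unique minimizer over $\xi\in\mathbb{R}^n$ of $\frac12\|\xi+\nabla f(x)\|^2$ subject to $G\xi\le-\alpha g(x)$, $H\xi=-\alpha h(x)$. $\Lambda_\alpha(x)$ is the set of $(u,v)\in\mathbb{R}^m_{\ge0}\times\mathbb{R}^k$ for which there exists $\xi\in\mathbb{R}^n$ with $\xi+\nabla f(x)+G^\top u+H^\top v=0$, $G\xi+\alpha g(x)\le0$, $H\xi+\alpha h(x)=0$, $u\ge0$, $u^\top(G\xi+\alpha g(x))=0$. The admissible control set is $K_\alpha(x)=\{(u,v)\in\mathbb{R}^m_{\ge0}\times\mathbb{R}^k: -GG^\top u-GH^\top v\le G\nabla f(x)-\alpha g(x),\ -HG^\top u-HH^\top v=H\nabla f(x)-\alpha h(x)\}$. *)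

theory Defs
  imports "HOL-Analysis.Analysis"
begin

text \<open>Data at a fixed point x: gradf = grad f(x), G = dg/dx(x) (an m x n matrix),
  H = dh/dx(x) (a k x n matrix), gx = g(x), hx = h(x).\<close>

definition feasible_set ::
  "real \<Rightarrow> real^'n^'m \<Rightarrow> real^'n^'k \<Rightarrow> real^'m \<Rightarrow> real^'k \<Rightarrow> (real^'n) set" where
  "feasible_set \<alpha> G H gx hx =
     {\<xi>. (\<forall>i. (G *v \<xi>) $ i \<le> - \<alpha> * gx $ i) \<and> H *v \<xi> = - (\<alpha> *\<^sub>R hx)}"

definition G_alpha ::
  "real \<Rightarrow> real^'n \<Rightarrow> real^'n^'m \<Rightarrow> real^'n^'k \<Rightarrow> real^'m \<Rightarrow> real^'k \<Rightarrow> real^'n" where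
  "G_alpha \<alpha> gradf G H gx hx =
     (THE \<xi>. \<xi> \<in> feasible_set \<alpha> G H gx hx \<and>
        (\<forall>\<zeta> \<in> feasible_set \<alpha> G H gx hx.
            (1/2) * (norm (\<xi> + gradf))\<^sup>2 \<le> (1/2) * (norm (\<zeta> + gradf))\<^sup>2))"

definition Lambda_alpha ::
  "real \<Rightarrow> real^'n \<Rightarrow> real^'n^'m \<Rightarrow> real^'n^'k \<Rightarrow> real^'m \<Rightarrow> real^'k \<Rightarrow> ((real^'m) \<times> (real^'k)) set" where
  "Lambda_alpha \<alpha> gradf G H gx hx =
     {(u, v). (\<forall>i. 0 \<le> u $ i) \<and>
        (\<exists>\<xi>. \<xi> + gradf + transpose G *v u + transpose H *v v = 0 \<and>
             (\<forall>i. (G *v \<xi> + \<alpha> *\<^sub>R gx) $ i \<le> 0) \<and>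
             H *v \<xi> + \<alpha> *\<^sub>R hx = 0 \<and>
             u \<bullet> (G *v \<xi> + \<alpha> *\<^sub>R gx) = 0)}"

definition K_alpha ::
  "real \<Rightarrow> real^'n \<Rightarrow> real^'n^'m \<Rightarrow> real^'n^'k \<Rightarrow> real^'m \<Rightarrow> real^'k \<Rightarrow> ((real^'m) \<times> (real^'k)) set" where
  "K_alpha \<alpha> gradf G H gx hx =
     {(u, v). (\<forall>i. 0 \<le> u $ i) \<and>
        (\<forall>i. (- ((G ** transpose G) *v u) - (G ** transpose H) *v v) $ i
              \<le> (G *v gradf - \<alpha> *\<^sub>R gx) $ i) \<and>
        - ((H ** transpose G) *v u) - (H ** transpose H) *v v = H *v gradf - \<alpha> *\<^sub>R hx}"

end

theory Submission
  imports Defs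
begin

lemma mv_neg: "(A::real^'n^'m) *v (- x) = - (A *v x)"
  using matrix_vector_mult_diff_distrib[of A 0 x] by simp

lemma tdot: "(transpose (A::real^'n^'m) *v u) \<bullet> d = u \<bullet> (A *v d)"
  by (simp add: dot_lmul_matrix)

lemma kkt_bound:
  fixes G :: "real^'n^'m" and H :: "real^'n^'k"
  assumes u0: "\<forall>i. 0 \<le> u $ i"
    and xi: "\<xi> + w + transpose G *v u + transpose H *v v = 0"
    and hx: "H *v \<xi> + \<alpha> *\<^sub>R hx = 0"
    and comp: "u \<bullet> (G *v \<xi> + \<alpha> *\<^sub>R gx) = 0"
    and z: "\<zeta> \<in> feasible_set \<alpha> G H gx hx"
  shows "(norm (\<xi> + w))\<^sup>2 + (norm (\<zeta> - \<xi>))\<^sup>2 \<le> (norm (\<zeta> + w))\<^sup>2"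
proof -
  define d where "d = \<zeta> - \<xi>"
  have e: "\<xi> + w = - (transpose G *v u + transpose H *v v)"
    using xi by (simp add: algebra_simps eq_neg_iff_add_eq_0)
  have zG: "\<forall>i. (G *v \<zeta>) $ i \<le> - \<alpha> * gx $ i" and zH: "H *v \<zeta> = - (\<alpha> *\<^sub>R hx)"
    using z by (auto simp: feasible_set_def)
  have "H *v \<xi> = - (\<alpha> *\<^sub>R hx)" using hx by (simp add: eq_neg_iff_add_eq_0)
  hence Hd: "H *v d = 0" using zH
    by (simp add: d_def matrix_vector_mult_diff_distrib)
  have "u \<bullet> (G *v \<zeta> + \<alpha> *\<^sub>R gx) \<le> 0"
    unfolding inner_vec_def
  proof (rule sum_nonpos)
    fix i
    have "(G *v \<zeta> + \<alpha> *\<^sub>R gx) $ i \<le> 0" using zG[rule_format, of i] by simp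
    thus "u $ i \<bullet> (G *v \<zeta> + \<alpha> *\<^sub>R gx) $ i \<le> 0"
      using u0 by (simp add: mult_nonneg_nonpos)
  qed
  hence "u \<bullet> (G *v d) \<le> 0" using comp
    by (simp add: d_def matrix_vector_mult_diff_distrib inner_diff_right inner_add_right)
  hence ip: "(\<xi> + w) \<bullet> d \<ge> 0"
    unfolding e by (simp only: inner_minus_left inner_add_left tdot Hd) simp
  have "\<zeta> + w = (\<xi> + w) + d" by (simp add: d_def)
  hence "(norm (\<zeta> + w))\<^sup>2 = (norm (\<xi> + w))\<^sup>2 + 2 * ((\<xi> + w) \<bullet> d) + (norm d)\<^sup>2"
    by (simp add: power2_norm_eq_inner inner_add_left inner_add_right inner_commute)
  thus ?thesis using ip by (simp add: d_def)
qed

lemma K_iff: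
  fixes G :: "real^'n^'m" and H :: "real^'n^'k"
  shows "(u, v) \<in> K_alpha \<alpha> w G H gx hx \<longleftrightarrow>
     (\<forall>i. 0 \<le> u $ i) \<and> (- w - transpose G *v u - transpose H *v v) \<in> feasible_set \<alpha> G H gx hx"
proof -
  have a: "G *v (- w - transpose G *v u - transpose H *v v) =
     - ((G ** transpose G) *v u) - (G ** transpose H) *v v - G *v w"
    by (simp only: matrix_vector_mult_diff_distrib mv_neg matrix_vector_mul_assoc) simp
  have b: "H *v (- w - transpose G *v u - transpose H *v v) =
     - ((H ** transpose G) *v u) - (H ** transpose H) *v v - H *v w"
    by (simp only: matrix_vector_mult_diff_distrib mv_neg matrix_vector_mul_assoc) simp
  have c1: "(\<forall>i. (- ((G ** transpose G) *v u) - (G ** transpose H) *v v) $ i \<le> (G *v w - \<alpha> *\<^sub>R gx) $ i)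
     \<longleftrightarrow> (\<forall>i. (- ((G ** transpose G) *v u) - (G ** transpose H) *v v - G *v w) $ i \<le> - \<alpha> * gx $ i)"
    by (auto simp: algebra_simps)
  have c2: "(- ((H ** transpose G) *v u) - (H ** transpose H) *v v = H *v w - \<alpha> *\<^sub>R hx)
     \<longleftrightarrow> (- ((H ** transpose G) *v u) - (H ** transpose H) *v v - H *v w = - (\<alpha> *\<^sub>R hx))"
    by (auto simp: algebra_simps)
  show ?thesis
    unfolding K_alpha_def feasible_set_def mem_Collect_eq case_prod_conv a b c1 c2 by simp
qed

lemma nrm_eq: "(norm (transpose (G::real^'n^'m) *v u + transpose (H::real^'n^'k) *v v))\<^sup>2
   = (norm ((- w - transpose G *v u - transpose H *v v) + w))\<^sup>2"
proof -
  have "(- w - transpose G *v u - transpose H *v v) + w = - (transpose G *v u + transpose H *v v)"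
    by (simp add: algebra_simps del: transpose_matrix_vector)
  thus ?thesis by (simp only: norm_minus_cancel)
qed

lemma in_Lambda:
  fixes G :: "real^'n^'m" and H :: "real^'n^'k"
  assumes "(u, v) \<in> Lambda_alpha \<alpha> w G H gx hx"
  shows "(\<forall>i. 0 \<le> u $ i) \<and> (- w - transpose G *v u - transpose H *v v) \<in> feasible_set \<alpha> G H gx hx
    \<and> (\<forall>\<zeta>\<in>feasible_set \<alpha> G H gx hx.
      (norm ((- w - transpose G *v u - transpose H *v v) + w))\<^sup>2
      + (norm (\<zeta> - (- w - transpose G *v u - transpose H *v v)))\<^sup>2 \<le> (norm (\<zeta> + w))\<^sup>2)"
proof -
  from assms obtain \<xi> where u0: "\<forall>i. 0 \<le> u $ i"
    and xi: "\<xi> + w + transpose G *v u + transpose H *v v = 0"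
    and gi: "\<forall>i. (G *v \<xi> + \<alpha> *\<^sub>R gx) $ i \<le> 0"
    and hx: "H *v \<xi> + \<alpha> *\<^sub>R hx = 0"
    and comp: "u \<bullet> (G *v \<xi> + \<alpha> *\<^sub>R gx) = 0"
    unfolding Lambda_alpha_def by blast
  have xe: "\<xi> = - w - transpose G *v u - transpose H *v v"
    using xi by (simp add: algebra_simps eq_neg_iff_add_eq_0 del: transpose_matrix_vector)
  have F: "\<xi> \<in> feasible_set \<alpha> G H gx hx"
    unfolding feasible_set_def using gi hx
    by (auto simp: eq_neg_iff_add_eq_0 add.commute le_diff_eq[symmetric] algebra_simps)
  show ?thesis using u0 F kkt_bound[OF u0 xi hx comp] unfolding xe[symmetric] by blast
qed

lemma main_gen:
  fixes G :: "real^'n^'m" and H :: "real^'n^'k"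
  assumes Lambda_ne: "Lambda_alpha \<alpha> w G H gx hx \<noteq> {}"
  shows "(\<forall>(u, v) \<in> Lambda_alpha \<alpha> w G H gx hx.
            (u, v) \<in> K_alpha \<alpha> w G H gx hx \<and>
            (\<forall>(u', v') \<in> K_alpha \<alpha> w G H gx hx.
               (norm (transpose G *v u + transpose H *v v))\<^sup>2
                 \<le> (norm (transpose G *v u' + transpose H *v v'))\<^sup>2))
       \<and> (\<forall>u v. (u, v) \<in> K_alpha \<alpha> w G H gx hx \<and>
            (\<forall>(u', v') \<in> K_alpha \<alpha> w G H gx hx.
               (norm (transpose G *v u + transpose H *v v))\<^sup>2
                 \<le> (norm (transpose G *v u' + transpose H *v v'))\<^sup>2)
            \<longrightarrow> G_alpha \<alpha> w G H gx hx
                  = - w - transpose G *v u - transpose H *v v)"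
    (is "?A \<and> ?B")
proof -
  define xi where "xi = (\<lambda>(u::real^'m) (v::real^'k). - w - transpose G *v u - transpose H *v v)"
  let ?F = "feasible_set \<alpha> G H gx hx"
  have A: ?A
  proof (intro ballI, clarify)
    fix u v assume L: "(u, v) \<in> Lambda_alpha \<alpha> w G H gx hx"
    note l = in_Lambda[OF L]
    have K: "(u, v) \<in> K_alpha \<alpha> w G H gx hx" using l K_iff by blast
    show "(u, v) \<in> K_alpha \<alpha> w G H gx hx \<and>
            (\<forall>(u', v') \<in> K_alpha \<alpha> w G H gx hx.
               (norm (transpose G *v u + transpose H *v v))\<^sup>2
                 \<le> (norm (transpose G *v u' + transpose H *v v'))\<^sup>2)"
    proof (intro conjI K ballI, clarify)
      fix u' v' assume K': "(u', v') \<in> K_alpha \<alpha> w G H gx hx"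
      hence "(- w - transpose G *v u' - transpose H *v v') \<in> ?F" using K_iff by blast
      with l have "(norm ((- w - transpose G *v u - transpose H *v v) + w))\<^sup>2
        \<le> (norm ((- w - transpose G *v u' - transpose H *v v') + w))\<^sup>2"
        by (smt (verit) zero_le_power2)
      thus "(norm (transpose G *v u + transpose H *v v))\<^sup>2
                 \<le> (norm (transpose G *v u' + transpose H *v v'))\<^sup>2"
        by (simp only: nrm_eq[of G u H v w] nrm_eq[of G u' H v' w])
    qed
  qed
  from Lambda_ne obtain u0 v0 where L0: "(u0, v0) \<in> Lambda_alpha \<alpha> w G H gx hx" by auto
  define \<xi>0 where "\<xi>0 = - w - transpose G *v u0 - transpose H *v v0"
  note l0 = in_Lambda[OF L0, folded \<xi>0_def]
  have K0: "(u0, v0) \<in> K_alpha \<alpha> w G H gx hx" using A L0 by blast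
  have Geq: "G_alpha \<alpha> w G H gx hx = \<xi>0"
    unfolding G_alpha_def
  proof (rule the_equality)
    show "\<xi>0 \<in> ?F \<and> (\<forall>\<zeta>\<in>?F. 1 / 2 * (norm (\<xi>0 + w))\<^sup>2 \<le> 1 / 2 * (norm (\<zeta> + w))\<^sup>2)"
    proof (intro conjI ballI)
      show "\<xi>0 \<in> ?F" using l0 by blast
      fix \<zeta> assume "\<zeta> \<in> ?F"
      with l0 have "(norm (\<xi>0 + w))\<^sup>2 + (norm (\<zeta> - \<xi>0))\<^sup>2 \<le> (norm (\<zeta> + w))\<^sup>2" by blast
      thus "1 / 2 * (norm (\<xi>0 + w))\<^sup>2 \<le> 1 / 2 * (norm (\<zeta> + w))\<^sup>2"
        using zero_le_power2[of "norm (\<zeta> - \<xi>0)"] by linarith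
    qed
  next
    fix \<xi> assume "\<xi> \<in> ?F \<and> (\<forall>\<zeta>\<in>?F. 1 / 2 * (norm (\<xi> + w))\<^sup>2 \<le> 1 / 2 * (norm (\<zeta> + w))\<^sup>2)"
    hence a: "\<xi> \<in> ?F" and b: "(norm (\<xi> + w))\<^sup>2 \<le> (norm (\<xi>0 + w))\<^sup>2" using l0 by auto
    from l0 a have "(norm (\<xi>0 + w))\<^sup>2 + (norm (\<xi> - \<xi>0))\<^sup>2 \<le> (norm (\<xi> + w))\<^sup>2" by blast
    with b have "(norm (\<xi> - \<xi>0))\<^sup>2 \<le> 0" by linarith
    thus "\<xi> = \<xi>0" by simp
  qed
  have B: ?B
  proof (intro allI impI, elim conjE)
    fix u v assume K: "(u, v) \<in> K_alpha \<alpha> w G H gx hx"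
      and m: "\<forall>(u', v') \<in> K_alpha \<alpha> w G H gx hx.
               (norm (transpose G *v u + transpose H *v v))\<^sup>2
                 \<le> (norm (transpose G *v u' + transpose H *v v'))\<^sup>2"
    define \<zeta> where "\<zeta> = - w - transpose G *v u - transpose H *v v"
    have zF: "\<zeta> \<in> ?F" using K K_iff unfolding \<zeta>_def by blast
    have "(norm (transpose G *v u + transpose H *v v))\<^sup>2
                 \<le> (norm (transpose G *v u0 + transpose H *v v0))\<^sup>2" using m K0 by blast
    hence b: "(norm (\<zeta> + w))\<^sup>2 \<le> (norm (\<xi>0 + w))\<^sup>2"
      unfolding \<zeta>_def \<xi>0_def by (simp only: nrm_eq[of G u H v w] nrm_eq[of G u0 H v0 w])
    from l0 zF have "(norm (\<xi>0 + w))\<^sup>2 + (norm (\<zeta> - \<xi>0))\<^sup>2 \<le> (norm (\<zeta> + w))\<^sup>2" by blast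
    with b have "(norm (\<zeta> - \<xi>0))\<^sup>2 \<le> 0" by linarith
    hence "\<zeta> = \<xi>0" by simp
    thus "G_alpha \<alpha> w G H gx hx = - w - transpose G *v u - transpose H *v v"
      using Geq \<zeta>_def by simp
  qed
  show ?thesis using A B by blast
qed

theorem mainTheorem6:
  fixes f :: "real^'n \<Rightarrow> real" and g :: "real^'n \<Rightarrow> real^'m" and h :: "real^'n \<Rightarrow> real^'k"
    and gradf :: "real^'n \<Rightarrow> real^'n"
    and Dg :: "real^'n \<Rightarrow> real^'n^'m" and Dh :: "real^'n \<Rightarrow> real^'n^'k"
    and \<alpha> :: real and x :: "real^'n"
  assumes f_C1: "\<And>y. (f has_derivative (\<lambda>d. gradf y \<bullet> d)) (at y)" "continuous_on UNIV gradf"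
    and g_C1: "\<And>y. (g has_derivative (\<lambda>d. Dg y *v d)) (at y)" "continuous_on UNIV Dg"
    and h_C1: "\<And>y. (h has_derivative (\<lambda>d. Dh y *v d)) (at y)" "continuous_on UNIV Dh"
    and alpha_pos: "\<alpha> > 0"
    and Lambda_ne: "Lambda_alpha \<alpha> (gradf x) (Dg x) (Dh x) (g x) (h x) \<noteq> {}"
  shows "(\<forall>(u, v) \<in> Lambda_alpha \<alpha> (gradf x) (Dg x) (Dh x) (g x) (h x).
            (u, v) \<in> K_alpha \<alpha> (gradf x) (Dg x) (Dh x) (g x) (h x) \<and>
            (\<forall>(u', v') \<in> K_alpha \<alpha> (gradf x) (Dg x) (Dh x) (g x) (h x).
               (norm (transpose (Dg x) *v u + transpose (Dh x) *v v))\<^sup>2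
                 \<le> (norm (transpose (Dg x) *v u' + transpose (Dh x) *v v'))\<^sup>2))
       \<and> (\<forall>u v. (u, v) \<in> K_alpha \<alpha> (gradf x) (Dg x) (Dh x) (g x) (h x) \<and>
            (\<forall>(u', v') \<in> K_alpha \<alpha> (gradf x) (Dg x) (Dh x) (g x) (h x).
               (norm (transpose (Dg x) *v u + transpose (Dh x) *v v))\<^sup>2
                 \<le> (norm (transpose (Dg x) *v u' + transpose (Dh x) *v v'))\<^sup>2)
            \<longrightarrow> G_alpha \<alpha> (gradf x) (Dg x) (Dh x) (g x) (h x)
                  = - gradf x - transpose (Dg x) *v u - transpose (Dh x) *v v)"
  by (rule main_gen[OF Lambda_ne])

end
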